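(* Let $k,m$ be positive integers with $k>1$, let $\mathbf{A}$ be a finite algebra having a $k$-edge operation among its term operations, and let $F\subseteq G$ be subuniverses of $\mathbf{A}^m$. Assume $\pi_T(F)=\pi_T(G)$ for all $T\subseteq\{1,\dots,m\}$ with $|T|<k$, and $\varphi_i(G)\subseteq\varphi_i(F)$ for all $i\in\{1,\dots,m\}$. Then $F=G$.
   Context: For $k\ge 2$, a $k$-edge operation on $A$ is $t:A^{k+1}\to A$ such that for all $x,y\in A$: $t(y,y,x,x,\dots,x)=x$, $t(y,x,y,x,\dots,x)=x$, and for each $i\in\{4,\dots,k+1\}$, $t(x,\dots,x,y,x,\dots,x)=x$ with $y$ in position $i$. For $\mathbf{a}=(a_1,\dots,a_m)\in A^m$ and $T\subseteq\{1,\dots,m\}$, $\pi_T(\mathbf{a}):=(a_i)_{i\in T}$, and $\pi_T(F):=\{\pi_T(\mathbf{a}):\mathbf{a}\in F\}$. For $F\subseteq A^m$ and $i\in\{1,\dots,m\}$, $\varphi_i(F):=\{(a_i,b_i)\in A^2 : \mathbf{a},\mathbf{b}\in F,\ \pi_{\{1,\dots,i-1\}}(\mathbf{a})=\pi_{\{1,\dots,i-1\}}(\mathbf{b})\}$. *)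

theory Defs
  imports Main "HOL-Library.FuncSet"
begin

text \<open>Tuples in A^m are lists
  of length m; coordinates are indexed 0..m-1 (paper: 1..m).\<close>

definition is_algebra :: "'a set \<Rightarrow> (nat \<times> ('a list \<Rightarrow> 'a)) set \<Rightarrow> bool" where
  "is_algebra A Ops \<longleftrightarrow> A \<noteq> {} \<and>
     (\<forall>(r, f) \<in> Ops. \<forall>xs. length xs = r \<and> set xs \<subseteq> A \<longrightarrow> f xs \<in> A)"

inductive_set term_ops :: "(nat \<times> ('a list \<Rightarrow> 'a)) set \<Rightarrow> nat \<Rightarrow> ('a list \<Rightarrow> 'a) set"
  for Ops :: "(nat \<times> ('a list \<Rightarrow> 'a)) set" and n :: nat where
  proj: "i < n \<Longrightarrow> (\<lambda>xs. xs ! i) \<in> term_ops Ops n"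
| app: "(r, f) \<in> Ops \<Longrightarrow> length gs = r \<Longrightarrow> (\<forall>g \<in> set gs. g \<in> term_ops Ops n)
        \<Longrightarrow> (\<lambda>xs. f (map (\<lambda>g. g xs) gs)) \<in> term_ops Ops n"

definition is_edge_op :: "'a set \<Rightarrow> nat \<Rightarrow> ('a list \<Rightarrow> 'a) \<Rightarrow> bool" where
  "is_edge_op A k t \<longleftrightarrow> (\<forall>x\<in>A. \<forall>y\<in>A.
      t ([y, y] @ replicate (k - 1) x) = x \<and>
      t ([y, x, y] @ replicate (k - 2) x) = x \<and>
      (\<forall>j\<in>{3..k}. t ((replicate (k + 1) x)[j := y]) = x))"

definition tuples :: "'a set \<Rightarrow> nat \<Rightarrow> 'a list set" where
  "tuples A m = {xs. length xs = m \<and> set xs \<subseteq> A}"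

definition subuniverse_pow :: "'a set \<Rightarrow> (nat \<times> ('a list \<Rightarrow> 'a)) set \<Rightarrow> nat \<Rightarrow> 'a list set \<Rightarrow> bool" where
  "subuniverse_pow A Ops m F \<longleftrightarrow> F \<subseteq> tuples A m \<and>
     (\<forall>(r, f) \<in> Ops. \<forall>as. length as = r \<and> set as \<subseteq> F \<longrightarrow>
        map (\<lambda>j. f (map (\<lambda>a. a ! j) as)) [0..<m] \<in> F)"

definition proj_tuple :: "nat set \<Rightarrow> 'a list \<Rightarrow> (nat \<Rightarrow> 'a)" where
  "proj_tuple T a = (\<lambda>i\<in>T. a ! i)"

definition proj_set :: "nat set \<Rightarrow> 'a list set \<Rightarrow> (nat \<Rightarrow> 'a) set" where
  "proj_set T F = proj_tuple T ` F"

text \<open>phi i F, 0-based: pairs of i-th entries of tuples agreeing on the first i coordinates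
  (paper's phi_{i+1}).\<close>
definition phi :: "nat \<Rightarrow> 'a list set \<Rightarrow> ('a \<times> 'a) set" where
  "phi i F = {(a ! i, b ! i) | a b. a \<in> F \<and> b \<in> F \<and> take i a = take i b}"

end

theory Submission
  imports Defs
begin

definition tapp :: "nat \<Rightarrow> ('a list \<Rightarrow> 'a) \<Rightarrow> 'a list list \<Rightarrow> 'a list" where
  "tapp m f us = map (\<lambda>j. f (map (\<lambda>u. u ! j) us)) [0..<m]"

lemma tapp_nth: "c < m \<Longrightarrow> tapp m f us ! c = f (map (\<lambda>u. u ! c) us)"
  by (simp add: tapp_def)

lemma term_ops_closed:
  assumes "f \<in> term_ops Ops n" and sub: "subuniverse_pow A Ops m F"
    and len: "length us = n" and us: "set us \<subseteq> F"
  shows "tapp m f us \<in> F"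
  using assms(1)
proof (induction rule: term_ops.induct)
  case (proj i)
  have uF: "us ! i \<in> F" using proj len us nth_mem by blast
  hence l: "length (us ! i) = m" using sub by (auto simp: subuniverse_pow_def tuples_def)
  have "tapp m (\<lambda>xs. xs ! i) us = us ! i"
    using proj len by (intro nth_equalityI) (auto simp: tapp_def l)
  then show ?case using uF by simp
next
  case (app r f gs)
  define as where "as = map (\<lambda>g. tapp m g us) gs"
  have asF: "set as \<subseteq> F" using app.IH by (auto simp: as_def)
  have las: "length as = r" using app.hyps(2) by (simp add: as_def)
  have "map (\<lambda>j. f (map (\<lambda>a. a ! j) as)) [0..<m] \<in> F"
    using sub app.hyps(1) asF las unfolding subuniverse_pow_def by blast
  moreover have "tapp m (\<lambda>xs. f (map (\<lambda>g. g xs) gs)) us = map (\<lambda>j. f (map (\<lambda>a. a ! j) as)) [0..<m]"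
    unfolding tapp_def as_def by (rule map_cong) (simp_all add: comp_def)
  ultimately show ?case by simp
qed

theorem lemma4p1:
  fixes A :: "'a set" and Ops :: "(nat \<times> ('a list \<Rightarrow> 'a)) set" and k m :: nat
    and F G :: "'a list set"
  assumes "k > 1" and "m > 0"
    and "is_algebra A Ops" and "finite A"
    and "\<exists>t \<in> term_ops Ops (k + 1). is_edge_op A k t"
    and "subuniverse_pow A Ops m F" and "subuniverse_pow A Ops m G" and "F \<subseteq> G"
    and "\<forall>T. T \<subseteq> {0..<m} \<and> card T < k \<longrightarrow> proj_set T F = proj_set T G"
    and "\<forall>i < m. phi i G \<subseteq> phi i F"
  shows "F = G"
proof -
  obtain t where t: "t \<in> term_ops Ops (k+1)" "is_edge_op A k t" using assms(5) by blast
  have Fsub: "F \<subseteq> tuples A m" using assms(6) unfolding subuniverse_pow_def by blast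
  have Gsub: "G \<subseteq> tuples A m" using assms(7) unfolding subuniverse_pow_def by blast
  have cl: "\<And>us. length us = k+1 \<Longrightarrow> set us \<subseteq> F \<Longrightarrow> tapp m t us \<in> F"
    using term_ops_closed[OF t(1) assms(6)] by blast
  have inA: "\<And>u c. u \<in> F \<Longrightarrow> c < m \<Longrightarrow> u ! c \<in> A"
  proof -
    fix u c assume "u \<in> F" "c < m"
    then have "set u \<subseteq> A" "length u = m" using Fsub by (auto simp: tuples_def)
    then show "u ! c \<in> A" using \<open>c < m\<close> nth_mem by blast
  qed
  have inAG: "\<And>u c. u \<in> G \<Longrightarrow> c < m \<Longrightarrow> u ! c \<in> A"
  proof -
    fix u c assume "u \<in> G" "c < m"
    then have "set u \<subseteq> A" "length u = m" using Gsub by (auto simp: tuples_def)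
    then show "u ! c \<in> A" using \<open>c < m\<close> nth_mem by blast
  qed
  have lenF: "\<And>u. u \<in> F \<Longrightarrow> length u = m" using Fsub by (auto simp: tuples_def)
  have lenG: "\<And>u. u \<in> G \<Longrightarrow> length u = m" using Gsub by (auto simp: tuples_def)
  define Q where "Q S \<longleftrightarrow> (\<forall>g\<in>G. \<exists>f\<in>F. \<forall>c\<in>S. f ! c = g ! c)" for S
  have small: "Q S" if "S \<subseteq> {0..<m}" "card S < k" for S
  proof -
    have eq: "proj_set S F = proj_set S G" using assms(9) that by blast
    show "Q S" unfolding Q_def
    proof
      fix g assume "g \<in> G"
      then have "proj_tuple S g \<in> proj_set S F" using eq by (simp add: proj_set_def)
      then obtain f where f: "f \<in> F" "proj_tuple S f = proj_tuple S g" by (auto simp: proj_set_def)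
      have "\<forall>c\<in>S. f ! c = g ! c"
      proof
        fix c assume "c \<in> S"
        then show "f ! c = g ! c" using fun_cong[OF f(2), of c] by (simp add: proj_tuple_def)
      qed
      then show "\<exists>f\<in>F. \<forall>c\<in>S. f ! c = g ! c" using f(1) by blast
    qed
  qed
  have k2: "k - 1 = Suc (k - 2)" using assms(1) by simp
  have edge1: "t ([y,y,x] @ replicate (k-2) x) = x" if "x \<in> A" "y \<in> A" for x y
  proof -
    have "t ([y,y] @ replicate (k-1) x) = x" using t(2) that by (simp add: is_edge_op_def)
    then show ?thesis using k2 by simp
  qed
  have edge2: "t ([y,x,y] @ replicate (k-2) x) = x" if "x \<in> A" "y \<in> A" for x y
    using t(2) that by (simp add: is_edge_op_def)
  have nu: "t ([x,x,x] @ ws) = x"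
    if x: "x \<in> A" and lw: "length ws = k-2" and wA: "set ws \<subseteq> A"
      and one: "\<forall>i<k-2. \<forall>j<k-2. i \<noteq> j \<longrightarrow> ws!i = x \<or> ws!j = x" for x ws
  proof (cases "\<forall>i<k-2. ws!i = x")
    case True
    then have "ws = replicate (k-2) x" by (intro nth_equalityI) (auto simp: lw)
    then show ?thesis using edge1[OF x x] by simp
  next
    case False
    then obtain i0 where i0: "i0 < k-2" "ws!i0 \<noteq> x" by auto
    define z where "z = ws ! i0"
    have "z \<in> set ws" using i0 lw unfolding z_def by simp
    then have zA: "z \<in> A" using wA by blast
    have "ws = (replicate (k-2) x)[i0 := z]"
    proof (rule nth_equalityI)
      show "length ws = length ((replicate (k-2) x)[i0 := z])" by (simp add: lw)
    next
      fix i assume "i < length ws"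
      then have i: "i < k-2" using lw by simp
      show "ws ! i = (replicate (k-2) x)[i0 := z] ! i"
      proof (cases "i = i0")
        case True then show ?thesis using i by (simp add: z_def)
      next
        case False
        then have "ws ! i = x" using one i i0 by blast
        then show ?thesis using i False by simp
      qed
    qed
    moreover have "k + 1 = Suc (Suc (Suc (k-2)))" using assms(1) by simp
    moreover have "i0 + 3 = Suc (Suc (Suc i0))" by simp
    ultimately have "[x,x,x] @ ws = (replicate (k+1) x)[i0+3 := z]"
      by (simp only: replicate_Suc list_update_code append.simps)
    moreover have "i0 + 3 \<in> {3..k}" using i0 by auto
    moreover have "\<forall>j\<in>{3..k}. t ((replicate (k+1) x)[j := z]) = x"
      using t(2) x zA unfolding is_edge_op_def by blast
    ultimately show ?thesis by simp
  qed
  have main: "\<forall>S. S \<subseteq> {0..<N} \<longrightarrow> Q S" if "N \<le> m" for N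
    using that
  proof (induction N)
    case 0
    then show ?case using small assms(1) by auto
  next
    case (Suc N)
    then have Nm: "N < m" and IH: "\<forall>S. S \<subseteq> {0..<N} \<longrightarrow> Q S" by auto
    have pre: "Q {0..<N}" using IH by blast
    have step: "\<forall>S. S \<subseteq> {0..<Suc N} \<and> N \<in> S \<and> card S = j \<longrightarrow> Q S" for j
    proof (induction j rule: less_induct)
      case (less j)
      show ?case
      proof (intro allI impI)
        fix S assume S: "S \<subseteq> {0..<Suc N} \<and> N \<in> S \<and> card S = j"
        have Sm: "S \<subseteq> {0..<m}" using S Nm by auto
        show "Q S"
        proof (cases "card S < k")
          case True
          then show ?thesis using small Sm by blast
        next
          case False
          define S' where "S' = S - {N}"
          have finS: "finite S" using S finite_subset by blast
          have cardS': "card S' = card S - 1" using S finS by (simp add: S'_def)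
          define cs where "cs = sorted_list_of_set S'"
          have finS': "finite S'" using finS by (simp add: S'_def)
          have lencs: "length cs = card S'" by (simp add: cs_def)
          have dcs: "distinct cs" by (simp add: cs_def)
          have setcs: "set cs = S'" using finS' by (simp add: cs_def)
          have klen: "k - 1 \<le> length cs" using False cardS' lencs by linarith
          have csS': "cs ! i \<in> S'" if "i < k - 1" for i
            using that klen setcs nth_mem by (metis less_le_trans)
          have csd: "cs ! i \<noteq> cs ! j" if "i < k-1" "j < k-1" "i \<noteq> j" for i j
            using that klen dcs nth_eq_iff_index_eq by (metis less_le_trans)
          have IHs: "Q (S - {cs ! i})" if "i < k - 1" for i
          proof -
            have ci: "cs ! i \<in> S'" using csS' that by blast
            have ciS: "cs ! i \<in> S" using ci by (simp add: S'_def)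
            have "card (S - {cs!i}) < j" using card_Diff1_less[OF finS ciS] S by simp
            moreover have "S - {cs!i} \<subseteq> {0..<Suc N} \<and> N \<in> S - {cs!i}" using S ci by (auto simp: S'_def)
            ultimately show ?thesis using less.IH by blast
          qed
          show "Q S" unfolding Q_def
          proof
            fix g assume gG: "g \<in> G"
            obtain f0 where f0: "f0 \<in> F" "\<forall>c\<in>{0..<N}. f0!c = g!c" using pre gG unfolding Q_def by blast
            have lf0: "length f0 = m" using lenF f0(1) by blast
            have lg: "length g = m" using lenG gG by blast
            have tk: "take N f0 = take N g"
              using f0(2) lf0 lg Nm by (intro nth_equalityI) auto
            have "(f0!N, g!N) \<in> phi N G" unfolding phi_def using f0(1) assms(8) gG tk by blast
            then have "(f0!N, g!N) \<in> phi N F" using assms(10) Nm by blast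
            then obtain a b where ab: "a \<in> F" "b \<in> F" "take N a = take N b" "a!N = f0!N" "b!N = g!N"
              unfolding phi_def by auto
            have la: "length a = m" and lb: "length b = m" using lenF ab by auto
            have abeq: "a ! c = b ! c" if "c < N" for c
              using ab(3) that by (metis nth_take)
            have "\<forall>i. \<exists>h. i < k-1 \<longrightarrow> h \<in> F \<and> (\<forall>c\<in>S - {cs!i}. h!c = g!c)"
              using IHs gG unfolding Q_def by blast
            then obtain h where h: "\<And>i. i < k-1 \<Longrightarrow> h i \<in> F \<and> (\<forall>c\<in>S - {cs!i}. h i ! c = g!c)"
              by metis
            define hl where "hl = h (k-2)"
            define hs where "hs = map h [0..<k-2]"
            have hlF: "hl \<in> F" using h assms(1) by (simp add: hl_def)
            have hsF: "set hs \<subseteq> F" using h by (auto simp: hs_def)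
            define T0 where "T0 = tapp m t ([a,a,f0] @ replicate (k-2) hl)"
            define T1 where "T1 = tapp m t ([a,b,f0] @ replicate (k-2) hl)"
            define T2 where "T2 = tapp m t ([f0,f0,f0] @ hs)"
            define P where "P = tapp m t ([T0,T1,T2] @ hs)"
            have T0F: "T0 \<in> F" unfolding T0_def using assms(1) ab f0 hlF by (intro cl) auto
            have T1F: "T1 \<in> F" unfolding T1_def using assms(1) ab f0 hlF by (intro cl) auto
            have T2F: "T2 \<in> F" unfolding T2_def using assms(1) f0 hsF by (intro cl) (auto simp: hs_def)
            have PF: "P \<in> F" unfolding P_def using assms(1) T0F T1F T2F hsF by (intro cl) (auto simp: hs_def)
            show "\<exists>f\<in>F. \<forall>c\<in>S. f ! c = g ! c"
            proof (intro bexI ballI)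
              fix c assume cS: "c \<in> S"
              have cm: "c < m" using cS Sm by auto
              have mhs: "map (\<lambda>u. u ! c) hs = map (\<lambda>i. h i ! c) [0..<k-2]" by (simp add: hs_def)
              have P_c: "P ! c = t ([T0!c, T1!c, T2!c] @ map (\<lambda>i. h i ! c) [0..<k-2])"
                by (simp add: P_def tapp_nth cm mhs)
              have T0_c: "T0 ! c = t ([a!c, a!c, f0!c] @ replicate (k-2) (hl!c))"
                by (simp add: T0_def tapp_nth cm)
              have T1_c: "T1 ! c = t ([a!c, b!c, f0!c] @ replicate (k-2) (hl!c))"
                by (simp add: T1_def tapp_nth cm)
              have T2_c: "T2 ! c = t ([f0!c, f0!c, f0!c] @ map (\<lambda>i. h i ! c) [0..<k-2])"
                by (simp add: T2_def tapp_nth cm mhs)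
              have gcA: "g ! c \<in> A" using inAG gG cm by blast
              have hcA: "h i ! c \<in> A" if "i < k-1" for i using inA h that cm by blast
              show "P ! c = g ! c"
              proof (cases "c = N")
                case True
                have hsN: "map (\<lambda>i. h i ! c) [0..<k-2] = replicate (k-2) (g!c)"
                proof -
                  have "map (\<lambda>i. h i ! c) [0..<k-2] = map (\<lambda>i. g ! c) [0..<k-2]"
                  proof (rule map_cong)
                    fix i assume "i \<in> set [0..<k-2]"
                    then have i: "i < k-1" by auto
                    then have "cs ! i \<noteq> N" using csS' by (auto simp: S'_def)
                    then show "h i ! c = g ! c" using h[OF i] cS True by auto
                  qed simp
                  then show ?thesis by (simp add: map_replicate_const)
                qed
                have hlN: "hl ! c = g ! c"
                proof -
                  have i: "k - 2 < k - 1" using assms(1) by simp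
                  then have "cs ! (k-2) \<noteq> N" using csS' by (auto simp: S'_def)
                  then show ?thesis using h[OF i] cS True by (auto simp: hl_def)
                qed
                have pA: "f0 ! c \<in> A" using inA f0(1) cm by blast
                have aN: "a ! c = f0 ! c" "b ! c = g ! c" using ab True by auto
                have T0N: "T0 ! c = t ([f0!c, f0!c, f0!c] @ replicate (k-2) (g!c))"
                  using T0_c aN hlN by simp
                have T2N: "T2 ! c = T0 ! c" using T2_c T0N hsN by simp
                have T1N: "T1 ! c = g ! c" using T1_c aN hlN edge2[OF gcA pA] by simp
                have dA: "T0 ! c \<in> A" using inA T0F cm by blast
                show ?thesis using P_c T2N T1N hsN edge2[OF gcA dA] by simp
              next
                case False
                then have cN: "c < N" using cS S by auto
                have yx: "b ! c = a ! c" "f0 ! c = g ! c" using abeq cN f0(2) by auto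
                have yA: "a ! c \<in> A" using inA ab(1) cm by blast
                have cS': "c \<in> S'" using cS False by (simp add: S'_def)
                show ?thesis
                proof (cases "c = cs ! (k-2)")
                  case True
                  have hsx: "map (\<lambda>i. h i ! c) [0..<k-2] = replicate (k-2) (g!c)"
                  proof -
                    have "map (\<lambda>i. h i ! c) [0..<k-2] = map (\<lambda>i. g ! c) [0..<k-2]"
                    proof (rule map_cong)
                      fix i assume "i \<in> set [0..<k-2]"
                      then have i: "i < k-1" "i \<noteq> k - 2" by auto
                      have "cs ! i \<noteq> c" using csd[OF i(1) _ i(2)] True assms(1) by simp
                      then show "h i ! c = g ! c" using h[OF i(1)] cS by auto
                    qed simp
                    then show ?thesis by (simp add: map_replicate_const)
                  qed
                  have T01: "T1 ! c = T0 ! c" using T0_c T1_c yx by simp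
                  have T2x: "T2 ! c = g ! c" using T2_c hsx yx edge1[OF gcA gcA] by simp
                  have gA: "T0 ! c \<in> A" using inA T0F cm by blast
                  show ?thesis using P_c T01 T2x hsx edge1[OF gcA gA] by simp
                next
                  case False
                  have hlx: "hl ! c = g ! c"
                  proof -
                    have i: "k - 2 < k - 1" using assms(1) by simp
                    show ?thesis using h[OF i] cS False by (auto simp: hl_def)
                  qed
                  have T0x: "T0 ! c = g ! c" using T0_c hlx yx edge1[OF gcA yA] by simp
                  have T1x: "T1 ! c = g ! c" using T1_c hlx yx edge1[OF gcA yA] by simp
                  define ws where "ws = map (\<lambda>i. h i ! c) [0..<k-2]"
                  have lws: "length ws = k-2" by (simp add: ws_def)
                  have wsA: "set ws \<subseteq> A" using hcA by (auto simp: ws_def)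
                  have one: "\<forall>i<k-2. \<forall>j<k-2. i \<noteq> j \<longrightarrow> ws!i = g!c \<or> ws!j = g!c"
                  proof (intro allI impI)
                    fix i j assume ij: "i < k-2" "j < k-2" "i \<noteq> j"
                    have "cs ! i \<noteq> cs ! j" using csd ij by simp
                    then have "c \<noteq> cs ! i \<or> c \<noteq> cs ! j" by auto
                    then show "ws!i = g!c \<or> ws!j = g!c"
                    proof
                      assume "c \<noteq> cs ! i"
                      then have "h i ! c = g ! c" using h[of i] ij cS by simp
                      then show ?thesis using ij by (simp add: ws_def)
                    next
                      assume "c \<noteq> cs ! j"
                      then have "h j ! c = g ! c" using h[of j] ij cS by simp
                      then show ?thesis using ij by (simp add: ws_def)
                    qed
                  qed
                  have T2x: "T2 ! c = g ! c" using T2_c yx nu[OF gcA lws wsA one] by (simp add: ws_def)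
                  show ?thesis using P_c T0x T1x T2x nu[OF gcA lws wsA one] by (simp add: ws_def)
                qed
              qed
            qed (rule PF)
          qed
        qed
      qed
    qed
    show ?case
    proof (intro allI impI)
      fix S assume S: "S \<subseteq> {0..<Suc N}"
      show "Q S"
      proof (cases "N \<in> S")
        case True then show ?thesis using step S by blast
      next
        case False
        have "S \<subseteq> {0..<N}"
        proof
          fix x assume "x \<in> S"
          then have "x < Suc N" "x \<noteq> N" using S False by auto
          then show "x \<in> {0..<N}" by simp
        qed
        then show ?thesis using IH by blast
      qed
    qed
  qed
  have "G \<subseteq> F"
  proof
    fix g assume gG: "g \<in> G"
    have "Q {0..<m}" using main[of m] by blast
    then obtain f where f: "f \<in> F" "\<forall>c\<in>{0..<m}. f!c = g!c" using gG unfolding Q_def by blast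
    have "f = g" using f lenF lenG gG by (intro nth_equalityI) auto
    then show "g \<in> F" using f by simp
  qed
  then show ?thesis using assms(8) by blast
qed

end
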